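(* Let $A$ be a sincere Nakayama algebra over an algebraically closed field $K$ with $n$ simple modules. Then $A$ has finite global dimension if and only if $A$ has a unique (up to isomorphism) indecomposable projective module of dimension $n$, i.e. exactly one index $i$ with $c_i=n$ in its Kupisch series. Moreover, for such algebras of finite global dimension, after cyclically rotating the Kupisch series so that $c_0=n$, the map sending $A$ with Kupisch series $[c_0,\dots,c_{n-1}]$ to the Dyck path $D$ with area sequence \[ [c_1-n+1,\ c_2-n+1,\ \dots,\ c_{n-1}-n+1,\ 1] \] is a bijection between (isomorphism classes of) sincere Nakayama algebras of finite global dimension with $n$ simple modules and Dyck paths of semilength $n-1$. Furthermore, \[ \operatorname{gldim} A = 2\cdot b_D, \] where $b_D$ is the bounce count of $D$.
   Context: Nakayama algebras are connected finite-dimensional algebras all of whose indecomposable modules are uniserial; they are given as bound quiver algebras $KQ/I$ with $Q$ the linear quiver $0\to1\to\cdots\to n-1$ or the cyclic quiver $0\to1\to\cdots\to n-1\to 0$ and $I$ admissible. Such an algebra is determined up to isomorphism by its Kupisch series $[c_0,\dots,c_{n-1}]$, $c_i=\dim_K e_iA$ (indices extended mod $n$); for cyclic ones, Kupisch series are exactly the sequences with $c_{i+1}+1\ge c_i\ge 2$ for all $i$ (indices mod $n$), and cyclic rotations of the Kupisch series give isomorphic algebras. An algebra is sincere if every indecomposable projective module has every simple module as a composition factor. A Dyck path of semilength $m$ is a lattice path from $(0,0)$ to $(2m,0)$ with steps $(1,1),(1,-1)$ never going below the $x$-axis. Its area sequence $[c_0,\dots,c_m]$ is defined by letting $c_k$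 be the largest integer such that $(2k+c_k-1,c_k-1)$ lies on the path; area sequences of Dyck paths of semilength $m$ are exactly the sequences with $c_{i+1}+1\ge c_i\ge 2$ for $0\le i\le m-1$ and $c_m=1$. The bounce path of a Dyck path with area sequence $[c_0,\dots,c_m]$: set $b_0=0$ and $b_{t+1}=b_t+c_{b_t}-1$ (from $(2b_t,0)$ the bounce path takes $c_{b_t}-1$ up steps then $c_{b_t}-1$ down steps, arriving at $(2b_{t+1},0)$); the bounce count $b_D$ is the number $d$ of steps until $b_d=m$. *)

theory Defs
  imports Main "HOL-Library.Extended_Nat"
begin

text \<open>A Kupisch series is a list cs = [c_0,...,c_{n-1}], n = length cs.
  Linear Nakayama algebras (linear quiver 0 -> 1 -> ... -> n-1) and cyclic ones.\<close>

definition kupisch_linear :: "nat list \<Rightarrow> bool" where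
  "kupisch_linear cs \<longleftrightarrow> length cs \<ge> 1 \<and> cs ! (length cs - 1) = 1 \<and>
     (\<forall>i. i + 1 < length cs \<longrightarrow> cs ! i \<ge> 2 \<and> cs ! (i + 1) + 1 \<ge> cs ! i)"

definition kupisch_cyclic :: "nat list \<Rightarrow> bool" where
  "kupisch_cyclic cs \<longleftrightarrow> length cs \<ge> 1 \<and>
     (\<forall>i < length cs. cs ! i \<ge> 2 \<and> cs ! ((i + 1) mod length cs) + 1 \<ge> cs ! i)"

definition nakayama :: "nat \<Rightarrow> nat list \<Rightarrow> bool" where
  "nakayama n cs \<longleftrightarrow> length cs = n \<and> (kupisch_linear cs \<or> kupisch_cyclic cs)"

definition kupisch_iso :: "nat list \<Rightarrow> nat list \<Rightarrow> bool" where
  "kupisch_iso cs ds \<longleftrightarrow> cs = ds \<or>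
     (kupisch_cyclic cs \<and> kupisch_cyclic ds \<and> (\<exists>k. ds = rotate k cs))"

text \<open>Composition factors (indices of simple modules) of the indecomposable projective P_i:
  P_i is uniserial with composition factors S_i, S_{i+1}, ..., S_{i+c_i-1} (indices mod n).\<close>
definition proj_comp_factors :: "nat list \<Rightarrow> nat \<Rightarrow> nat set" where
  "proj_comp_factors cs i = {(i + j) mod length cs | j. j < cs ! i}"

definition sincere :: "nat list \<Rightarrow> bool" where
  "sincere cs \<longleftrightarrow> (\<forall>i < length cs. proj_comp_factors cs i = {0..<length cs})"

text \<open>Indecomposable modules are uniserial M(i,l): top S_i, length l, 1 <= l <= c_i.
  M(i,l) is projective iff l = c_i (then it is P_i); otherwise its projective cover is P_i
  and its first syzygy is rad^l P_i = M(i+l, c_i - l).\<close>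

definition is_proj_mod :: "nat list \<Rightarrow> nat \<times> nat \<Rightarrow> bool" where
  "is_proj_mod cs M \<longleftrightarrow> snd M = cs ! fst M"

definition syzygy :: "nat list \<Rightarrow> nat \<times> nat \<Rightarrow> nat \<times> nat" where
  "syzygy cs M = ((fst M + snd M) mod length cs, cs ! fst M - snd M)"

definition proj_dim :: "nat list \<Rightarrow> nat \<times> nat \<Rightarrow> enat" where
  "proj_dim cs M =
     (if \<exists>k. is_proj_mod cs ((syzygy cs ^^ k) M)
      then enat (LEAST k. is_proj_mod cs ((syzygy cs ^^ k) M))
      else \<infinity>)"

definition indec_modules :: "nat list \<Rightarrow> (nat \<times> nat) set" where
  "indec_modules cs = {(i, l). i < length cs \<and> 1 \<le> l \<and> l \<le> cs ! i}"

definition gldim :: "nat list \<Rightarrow> enat" where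
  "gldim cs = (SUP M \<in> indec_modules cs. proj_dim cs M)"

text \<open>A path is a list of steps, True = up step (1,1), False = down step (1,-1).\<close>

definition height :: "bool list \<Rightarrow> nat \<Rightarrow> int" where
  "height p x = (\<Sum>s \<leftarrow> take x p. if s then 1 else -1)"

definition dyck_path :: "nat \<Rightarrow> bool list \<Rightarrow> bool" where
  "dyck_path m p \<longleftrightarrow> length p = 2 * m \<and> (\<forall>x \<le> 2 * m. height p x \<ge> 0) \<and> height p (2 * m) = 0"

definition on_path :: "bool list \<Rightarrow> nat \<Rightarrow> int \<Rightarrow> bool" where
  "on_path p x y \<longleftrightarrow> x \<le> length p \<and> height p x = y"

definition area_seq :: "bool list \<Rightarrow> nat list" where
  "area_seq p = map (\<lambda>k. GREATEST c::nat. c \<ge> 1 \<and> on_path p (2 * k + c - 1) (int c - 1))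
                    [0..<length p div 2 + 1]"

fun bounce_pts :: "nat list \<Rightarrow> nat \<Rightarrow> nat" where
  "bounce_pts cs 0 = 0"
| "bounce_pts cs (Suc t) = bounce_pts cs t + cs ! (bounce_pts cs t) - 1"

definition bounce_count_seq :: "nat list \<Rightarrow> nat" where
  "bounce_count_seq cs = (LEAST d. bounce_pts cs d = length cs - 1)"

definition bounce_count :: "bool list \<Rightarrow> nat" where
  "bounce_count p = bounce_count_seq (area_seq p)"

definition kupisch_dyck :: "nat \<Rightarrow> nat list \<Rightarrow> bool list \<Rightarrow> bool" where
  "kupisch_dyck n cs p \<longleftrightarrow> cs ! 0 = n \<and>
     area_seq p = map (\<lambda>c. c + 1 - n) (tl cs) @ [1]"

end

theory Submission
  imports Defs
begin


definition dn :: "bool list \<Rightarrow> nat \<Rightarrow> nat" where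
  "dn p x = length (filter Not (take x p))"

lemma sum_pm: "(\<Sum>s \<leftarrow> q. if s then 1 else -1 :: int) = int (length q) - 2 * int (length (filter Not q))"
  by (induction q) auto

lemma height_dn: "height p x = int (min x (length p)) - 2 * int (dn p x)"
  unfolding height_def dn_def sum_pm by simp

lemma dn_0[simp]: "dn p 0 = 0" by (simp add: dn_def)

lemma dn_Suc: "dn p (Suc x) = dn p x + (if x < length p \<and> \<not> p ! x then 1 else 0)"
proof (cases "x < length p")
  case True
  then show ?thesis unfolding dn_def by (simp add: take_Suc_conv_app_nth)
next
  case False
  then show ?thesis unfolding dn_def by simp
qed

lemma dn_Suc_le: "dn p (Suc x) \<le> Suc (dn p x)"
  using dn_Suc[of p x] by simp

lemma dn_mono: "x \<le> y \<Longrightarrow> dn p x \<le> dn p y"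
  by (rule lift_Suc_mono_le[of "dn p"]) (auto simp: dn_Suc)

lemma area_len: "length (area_seq p) = length p div 2 + 1"
  unfolding area_seq_def by simp

lemma area_nth: "k \<le> length p div 2 \<Longrightarrow>
  area_seq p ! k = (GREATEST c::nat. c \<ge> 1 \<and> 2*k + c - 1 \<le> length p \<and> dn p (2*k + c - 1) = k)"
proof -
  assume k: "k \<le> length p div 2"
  have "area_seq p ! k = (GREATEST c::nat. c \<ge> 1 \<and> on_path p (2 * k + c - 1) (int c - 1))"
    unfolding area_seq_def using k by (simp del: upt_Suc add: nth_map_upt)
  also have "(\<lambda>c::nat. c \<ge> 1 \<and> on_path p (2 * k + c - 1) (int c - 1)) =
     (\<lambda>c. c \<ge> 1 \<and> 2*k + c - 1 \<le> length p \<and> dn p (2*k + c - 1) = k)"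
    by (rule ext) (auto simp: on_path_def height_dn)
  finally show ?thesis .
qed

lemma area_at:
  assumes lp: "length p = 2*m" and k: "k \<le> m" and M: "M \<le> 2*m" "dn p M = k" "2*k \<le> M"
    and mx: "\<And>y. y \<le> 2*m \<Longrightarrow> dn p y = k \<Longrightarrow> y \<le> M"
  shows "area_seq p ! k = M + 1 - 2*k"
proof -
  have "area_seq p ! k = (GREATEST c::nat. c \<ge> 1 \<and> 2*k + c - 1 \<le> length p \<and> dn p (2*k + c - 1) = k)"
    using k lp by (intro area_nth) simp
  also have "\<dots> = M + 1 - 2*k"
  proof (rule Greatest_equality)
    show "1 \<le> M + 1 - 2 * k \<and> 2 * k + (M + 1 - 2 * k) - 1 \<le> length p \<and> dn p (2 * k + (M + 1 - 2 * k) - 1) = k"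
      using M lp by simp
  next
    fix y assume "1 \<le> y \<and> 2 * k + y - 1 \<le> length p \<and> dn p (2 * k + y - 1) = k"
    then have "2 * k + y - 1 \<le> M" using mx lp by simp
    then show "y \<le> M + 1 - 2 * k" using M by simp
  qed
  finally show ?thesis .
qed

lemma dyck_dn:
  "dyck_path m p \<longleftrightarrow> length p = 2*m \<and> (\<forall>x \<le> 2*m. 2 * dn p x \<le> x) \<and> dn p (2*m) = m"
  unfolding dyck_path_def height_dn by auto

lemma dn_ivt:
  assumes "k \<le> dn p y"
  shows "\<exists>x\<le>y. dn p x = k"
proof -
  define x where "x = (LEAST x. k \<le> dn p x)"
  have x1: "k \<le> dn p x" unfolding x_def using assms by (rule LeastI)
  have xy: "x \<le> y" unfolding x_def using assms by (rule Least_le)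
  have "dn p x = k"
  proof (cases x)
    case 0 then show ?thesis using x1 by simp
  next
    case (Suc z)
    then have "\<not> k \<le> dn p z" unfolding x_def using not_less_Least[of z "\<lambda>x. k \<le> dn p x"] x_def by simp
    then show ?thesis using x1 dn_Suc_le[of p z] Suc by simp
  qed
  then show ?thesis using xy by blast
qed


lemma dyck_M:
  assumes d: "dyck_path m p" and k: "k \<le> m"
  obtains M where "M \<le> 2*m" "dn p M = k" "2*k \<le> M"
    "\<And>y. y \<le> 2*m \<Longrightarrow> dn p y = k \<Longrightarrow> y \<le> M" "area_seq p ! k = M + 1 - 2*k"
proof -
  have D: "length p = 2*m" "\<And>x. x \<le> 2*m \<Longrightarrow> 2 * dn p x \<le> x" "dn p (2*m) = m"
    using d by (auto simp: dyck_dn)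
  obtain x where x: "x \<le> 2*m" "dn p x = k" using dn_ivt[of k p "2*m"] D k by auto
  define P where "P = (\<lambda>x. x \<le> 2*m \<and> dn p x = k)"
  define M where "M = Greatest P"
  have PM: "P M" unfolding M_def by (rule GreatestI_nat[of P x "2*m"]) (auto simp: P_def x)
  have mx: "y \<le> M" if "y \<le> 2*m" "dn p y = k" for y
    unfolding M_def by (rule Greatest_le_nat[of P y "2*m"]) (auto simp: P_def that)
  have M1: "M \<le> 2*m" "dn p M = k" using PM P_def by auto
  have M2: "2*k \<le> M" using D(2)[OF M1(1)] M1 by simp
  have "area_seq p ! k = M + 1 - 2*k" using area_at[OF D(1) k M1 M2 mx] by blast
  then show ?thesis using that M1 M2 mx by blast
qed

lemma dn_le_iff:
  assumes d: "dyck_path m p" and k: "k \<le> m" and x: "x \<le> 2*m"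
  shows "dn p x \<le> k \<longleftrightarrow> x \<le> area_seq p ! k + 2*k - 1"
proof -
  obtain M where M: "M \<le> 2*m" "dn p M = k" "2*k \<le> M"
    "\<And>y. y \<le> 2*m \<Longrightarrow> dn p y = k \<Longrightarrow> y \<le> M" "area_seq p ! k = M + 1 - 2*k"
    using dyck_M[OF d k] by blast
  have eq: "area_seq p ! k + 2*k - 1 = M" using M by simp
  show ?thesis unfolding eq
  proof
    assume a: "dn p x \<le> k"
    show "x \<le> M"
    proof (rule ccontr)
      assume "\<not> x \<le> M"
      then have "dn p M \<le> dn p x" by (intro dn_mono) simp
      then have "dn p x = k" using a M by simp
      then show False using M(4)[OF x] \<open>\<not> x \<le> M\<close> by simp
    qed
  next
    assume "x \<le> M"
    then show "dn p x \<le> k" using dn_mono[of x M p] M by simp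
  qed
qed

lemma area_inj:
  assumes dp: "dyck_path m p" and dq: "dyck_path m q" and eq: "area_seq p = area_seq q"
  shows "p = q"
proof -
  have Dp: "length p = 2*m" "dn p (2*m) = m" using dp by (auto simp: dyck_dn)
  have Dq: "length q = 2*m" "dn q (2*m) = m" using dq by (auto simp: dyck_dn)
  have dneq: "dn p x = dn q x" if x: "x \<le> 2*m" for x
  proof -
    have pm: "dn p x \<le> m" using dn_mono[OF x, of p] Dp by simp
    have qm: "dn q x \<le> m" using dn_mono[OF x, of q] Dq by simp
    have iff: "dn p x \<le> k \<longleftrightarrow> dn q x \<le> k" if "k \<le> m" for k
      using dn_le_iff[OF dp that x] dn_le_iff[OF dq that x] eq by simp
    show ?thesis using iff[OF pm] iff[OF qm] by simp
  qed
  show ?thesis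
  proof (rule nth_equalityI)
    show "length p = length q" using Dp Dq by simp
  next
    fix j assume j: "j < length p"
    have "dn p (Suc j) = dn q (Suc j)" "dn p j = dn q j" using j Dp by (auto intro!: dneq)
    then show "p ! j = q ! j" using dn_Suc[of p j] dn_Suc[of q j] j Dp Dq by (auto split: if_splits)
  qed
qed

lemma area_props:
  assumes d: "dyck_path m p"
  shows "length (area_seq p) = m + 1" "area_seq p ! m = 1"
    "\<And>k. k < m \<Longrightarrow> 2 \<le> area_seq p ! k"
    "\<And>k. k < m \<Longrightarrow> area_seq p ! k \<le> area_seq p ! (Suc k) + 1"
proof -
  have D: "length p = 2*m" "\<And>x. x \<le> 2*m \<Longrightarrow> 2 * dn p x \<le> x" "dn p (2*m) = m"
    using d by (auto simp: dyck_dn)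
  show "length (area_seq p) = m + 1" using D by (simp add: area_len)
  obtain M where M: "M \<le> 2*m" "dn p M = m" "2*m \<le> M"
    "area_seq p ! m = M + 1 - 2*m"
    using dyck_M[OF d, of m] by blast
  then show "area_seq p ! m = 1" by simp
  fix k assume k: "k < m"
  obtain Mk where Mk: "Mk \<le> 2*m" "dn p Mk = k" "2*k \<le> Mk"
    "\<And>y. y \<le> 2*m \<Longrightarrow> dn p y = k \<Longrightarrow> y \<le> Mk" "area_seq p ! k = Mk + 1 - 2*k"
    using dyck_M[OF d, of k] k by auto
  have "Mk \<noteq> 2*m" using Mk D k by auto
  then have Mk1: "Suc Mk \<le> 2*m" using Mk by simp
  have "dn p (Suc Mk) \<noteq> k" using Mk(4)[OF Mk1] by auto
  then have "dn p (Suc Mk) = Suc k" using dn_Suc_le[of p Mk] dn_mono[of Mk "Suc Mk" p] Mk by simp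
  then have "2*k + 1 \<le> Mk" using D(2)[OF Mk1] by simp
  then show "2 \<le> area_seq p ! k" using Mk by simp
  obtain M' where M': "M' \<le> 2*m" "dn p M' = Suc k" "2*Suc k \<le> M'"
    "area_seq p ! Suc k = M' + 1 - 2*Suc k"
    using dyck_M[OF d, of "Suc k"] k by auto
  have "Mk < M'"
  proof (rule ccontr)
    assume "\<not> Mk < M'"
    then have "dn p M' \<le> dn p Mk" by (intro dn_mono) simp
    then show False using M' Mk by simp
  qed
  then show "area_seq p ! k \<le> area_seq p ! (Suc k) + 1" using Mk M' by simp
qed


lemma area_exists:
  assumes lA: "length A = m + 1" and Am: "A ! m = 1"
    and A2: "\<And>k. k < m \<Longrightarrow> 2 \<le> A ! k"
    and Amono: "\<And>k. k < m \<Longrightarrow> A ! k \<le> A ! (Suc k) + 1"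
  shows "\<exists>p. dyck_path m p \<and> area_seq p = A"
proof -
  define M where "M k = A ! k + 2*k - 1" for k
  have A1: "1 \<le> A ! k" if "k \<le> m" for k
    using A2[of k] Am that by (cases "k = m") auto
  have Msuc: "M k < M (Suc k)" if "k < m" for k
    using A2[OF that] Amono[OF that] A1[of "Suc k"] that unfolding M_def by simp
  have Mlt: "M i < M j" if "i < j" "j \<le> m" for i j
    using that
  proof (induction j)
    case 0 then show ?case by simp
  next
    case (Suc j)
    show ?case
    proof (cases "i = j")
      case True then show ?thesis using Msuc Suc by simp
    next
      case False
      then have "M i < M j" using Suc by simp
      also have "M j < M (Suc j)" using Msuc Suc by simp
      finally show ?thesis .
    qed
  qed
  have Miff: "M i < M j \<longleftrightarrow> i < j" if "i \<le> m" "j \<le> m" for i j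
    using Mlt[of i j] Mlt[of j i] that by (metis less_asym' linorder_neqE_nat)
  have Mm: "M m = 2*m" using Am unfolding M_def by simp
  have Mge: "2*k + 1 \<le> M k" if "k < m" for k using A2[OF that] unfolding M_def by simp
  define p where "p = map (\<lambda>j. j \<notin> M ` {..<m}) [0..<2*m]"
  have lp: "length p = 2*m" unfolding p_def by simp
  have dnp: "dn p x = card {k. k < m \<and> M k < x}" if x: "x \<le> 2*m" for x
  proof -
    have tk: "take x p = map (\<lambda>j. j \<notin> M ` {..<m}) [0..<x]" unfolding p_def using x
      by (simp add: take_map min_def)
    have "dn p x = card {i. i < x \<and> i \<in> M ` {..<m}}"
      unfolding dn_def tk length_filter_conv_card by (intro arg_cong[where f=card]) auto
    also have "{i. i < x \<and> i \<in> M ` {..<m}} = M ` {k. k < m \<and> M k < x}" by auto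
    also have "card \<dots> = card {k. k < m \<and> M k < x}"
    proof (rule card_image)
      show "inj_on M {k. k < m \<and> M k < x}"
        unfolding inj_on_def using Miff by (metis less_irrefl less_or_eq_imp_le linorder_neqE_nat mem_Collect_eq)
    qed
    finally show ?thesis .
  qed
  have dnM: "dn p (M k) = k" if k: "k \<le> m" for k
  proof -
    have "M k \<le> 2*m" using Mm Mlt[of k m] k by (cases "k = m") auto
    then have "dn p (M k) = card {k'. k' < m \<and> M k' < M k}" by (rule dnp)
    also have "{k'. k' < m \<and> M k' < M k} = {..<k}" using Miff k by auto
    finally show ?thesis by simp
  qed
  have mx: "y \<le> M k" if k: "k \<le> m" and y: "y \<le> 2*m" "dn p y = k" for k y
  proof (rule ccontr)
    assume ny: "\<not> y \<le> M k"
    then have km: "k < m" using Mm y k by (cases "k = m") auto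
    have "{..k} \<subseteq> {k'. k' < m \<and> M k' < y}"
    proof
      fix k' assume "k' \<in> {..k}"
      then have "k' \<le> k" by simp
      then have "M k' \<le> M k" using Miff[of k k'] km by (cases "k' = k") auto
      then show "k' \<in> {k'. k' < m \<and> M k' < y}" using ny km \<open>k' \<le> k\<close> by auto
    qed
    then have "card {..k} \<le> card {k'. k' < m \<and> M k' < y}" by (intro card_mono) auto
    then show False using dnp[OF y(1)] y by simp
  qed
  have pos: "2 * dn p x \<le> x" if x: "x \<le> 2*m" for x
  proof (cases "{k. k < m \<and> M k < x} = {}")
    case True then show ?thesis using dnp[OF x] by (simp only:) simp
  next
    case False
    define S where "S = {k. k < m \<and> M k < x}"
    have fS: "finite S" unfolding S_def by simp
    define t where "t = Max S"
    have tS: "t \<in> S" unfolding t_def using False fS S_def by (intro Max_in) auto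
    have "S \<subseteq> {..t}" unfolding t_def using fS by auto
    then have "card S \<le> Suc t" using card_mono[of "{..t}" S] by simp
    moreover have "2*t + 1 \<le> M t" "M t < x" using tS Mge unfolding S_def by auto
    ultimately show ?thesis using dnp[OF x] S_def by simp
  qed
  have dn2m: "dn p (2*m) = m"
  proof -
    have "{k. k < m \<and> M k < 2*m} = {..<m}" using Mlt[of _ m] Mm by auto
    then show ?thesis using dnp[of "2*m"] by simp
  qed
  have dy: "dyck_path m p" unfolding dyck_dn using lp pos dn2m by simp
  have "area_seq p = A"
  proof (rule nth_equalityI)
    show "length (area_seq p) = length A" using lp lA by (simp add: area_len)
  next
    fix k assume "k < length (area_seq p)"
    then have k: "k \<le> m" using lp by (simp add: area_len)
    have Mk2: "M k \<le> 2*m" using Mm Mlt[of k m] k by (cases "k = m") auto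
    have "area_seq p ! k = M k + 1 - 2*k"
      using area_at[OF lp k Mk2 dnM[OF k]] mx[OF k] A1[OF k] unfolding M_def by simp
    then show "area_seq p ! k = A ! k" using A1[OF k] unfolding M_def by simp
  qed
  then show ?thesis using dy by blast
qed



locale kup =
  fixes n :: nat and cs :: "nat list"
  assumes len: "length cs = n" and npos: "1 \<le> n"
    and ge: "\<And>i. i < n \<Longrightarrow> n \<le> cs ! i"
    and cmono: "\<And>i. i < n \<Longrightarrow> cs ! i \<le> cs ! ((i+1) mod n) + 1"
begin

definition F :: "nat \<Rightarrow> nat" where "F x = x + cs ! (x mod n)"

lemma F_ge: "x + n \<le> F x"
  unfolding F_def using ge[of "x mod n"] npos by simp

lemma F_Suc: "F x \<le> F (Suc x)"
proof -
  have "Suc x mod n = (x mod n + 1) mod n" by (simp add: mod_Suc_eq)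
  then show ?thesis unfolding F_def using cmono[of "x mod n"] npos by simp
qed

lemma F_mono: "x \<le> y \<Longrightarrow> F x \<le> F y"
  by (rule lift_Suc_mono_le[of F]) (auto simp: F_Suc)

lemma F_add: "F (x + k*n) = F x + k*n"
  unfolding F_def by simp

lemma Fpow_add: "(F^^j) (x + k*n) = (F^^j) x + k*n"
  by (induction j) (auto simp: F_add)

lemma Fpow_add1: "(F^^j) (x + n) = (F^^j) x + n"
  using Fpow_add[of j x 1] by simp

lemma Fpow_mono: "x \<le> y \<Longrightarrow> (F^^j) x \<le> (F^^j) y"
  by (induction j) (auto simp: F_mono)

definition step :: "nat \<times> nat \<Rightarrow> nat \<times> nat" where "step = (\<lambda>(a,b). (b, F a))"

lemma step_even: "(step ^^ (2*k)) (a,b) = ((F^^k) a, (F^^k) b)"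
  by (induction k) (auto simp: step_def)

lemma step_odd: "(step ^^ (2*k+1)) (a,b) = ((F^^k) b, (F^^Suc k) a)"
  using step_even[of k a b] by (simp add: step_def)

definition rep :: "nat \<times> nat \<Rightarrow> nat \<times> nat" where "rep = (\<lambda>(a,b). (a mod n, b - a))"

definition inv :: "nat \<times> nat \<Rightarrow> bool" where "inv = (\<lambda>(a,b). a \<le> b \<and> b \<le> F a)"

lemma syz_rep: "a \<le> b \<Longrightarrow> syzygy cs (rep (a,b)) = rep (step (a,b))"
proof -
  assume ab: "a \<le> b"
  have "(a mod n + (b - a)) mod n = (a + (b - a)) mod n" by (simp add: mod_add_left_eq)
  then show ?thesis unfolding syzygy_def rep_def step_def F_def using len ab by auto
qed

lemma inv_step: "inv p \<Longrightarrow> inv (step p)"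
  by (cases p) (auto simp: inv_def step_def F_mono)

lemma syz_pow: "inv p \<Longrightarrow> (syzygy cs ^^ m) (rep p) = rep ((step^^m) p) \<and> inv ((step^^m) p)"
proof (induction m)
  case 0 then show ?case by simp
next
  case (Suc m)
  obtain a b where ab: "(step^^m) p = (a,b)" by fastforce
  with Suc have "a \<le> b" by (auto simp: inv_def)
  with Suc ab show ?case by (auto simp: syz_rep inv_step)
qed

lemma proj_rep: "a \<le> b \<Longrightarrow> is_proj_mod cs (rep (a,b)) \<longleftrightarrow> b = F a"
  unfolding is_proj_mod_def rep_def F_def by auto

definition projat :: "nat \<times> nat \<Rightarrow> nat \<Rightarrow> bool" where
  "projat p m = (snd ((step^^m) p) = F (fst ((step^^m) p)))"

lemma proj_iff: "inv p \<Longrightarrow> is_proj_mod cs ((syzygy cs ^^ m) (rep p)) \<longleftrightarrow> projat p m"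
proof -
  assume p: "inv p"
  obtain a b where ab: "(step^^m) p = (a,b)" by fastforce
  with syz_pow[OF p, of m] show ?thesis by (auto simp: projat_def inv_def proj_rep)
qed

lemma pd_le: "inv p \<Longrightarrow> projat p m \<Longrightarrow> proj_dim cs (rep p) \<le> enat m"
  unfolding proj_dim_def using proj_iff by (auto intro: Least_le)

lemma pd_eq: "inv p \<Longrightarrow> projat p m \<Longrightarrow> (\<And>j. j < m \<Longrightarrow> \<not> projat p j) \<Longrightarrow> proj_dim cs (rep p) = enat m"
  unfolding proj_dim_def using proj_iff
  by (auto intro!: Least_equality) (meson not_le)

lemma pd_inf: "inv p \<Longrightarrow> (\<And>j. \<not> projat p j) \<Longrightarrow> proj_dim cs (rep p) = \<infinity>"
  unfolding proj_dim_def using proj_iff by auto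

lemma mod_rep: "(i,l) \<in> indec_modules cs \<Longrightarrow> a mod n = i \<Longrightarrow> (i,l) = rep (a, a+l) \<and> inv (a, a+l)"
  unfolding indec_modules_def rep_def inv_def F_def by auto


lemma gldim_ge: "M \<in> indec_modules cs \<Longrightarrow> proj_dim cs M \<le> gldim cs"
  unfolding gldim_def by (rule SUP_upper)

lemma gldim_inf_none:
  assumes "\<And>i. i < n \<Longrightarrow> cs ! i \<noteq> n"
  shows "gldim cs = \<infinity>"
proof -
  have inv: "inv (0, n)" using F_ge[of 0] by (simp add: inv_def)
  have rp: "rep (0, n) = (0, n)" by (simp add: rep_def)
  have mem: "(0, n) \<in> indec_modules cs" using npos ge[of 0] len by (auto simp: indec_modules_def)
  have np: "\<not> projat (0, n) m" for m
  proof -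
    have "\<exists>k. m = 2*k \<or> m = 2*k+1" by presburger
    then obtain k where "m = 2*k \<or> m = 2*k+1" by blast
    then show ?thesis
    proof
      assume m: "m = 2*k"
      define x where "x = (F^^k) 0"
      have "(F^^k) n = x + n" using Fpow_add1[of k 0] by (simp add: x_def)
      moreover have "x mod n < n" using npos by simp
      ultimately show ?thesis using assms[of "x mod n"] m
        by (simp add: projat_def step_even x_def[symmetric] F_def)
    next
      assume m: "m = 2*k+1"
      define x where "x = (F^^k) 0"
      have "(F^^k) n = x + n" using Fpow_add1[of k 0] by (simp add: x_def)
      moreover have "F (x + n) = F x + n" using F_add[of x 1] by simp
      ultimately show ?thesis using npos
        unfolding projat_def m step_odd by (simp add: x_def[symmetric])
    qed
  qed
  have "proj_dim cs (0, n) = \<infinity>" using pd_inf[OF inv np] rp by simp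
  with gldim_ge[OF mem] show ?thesis by simp
qed

lemma gldim_inf_two:
  assumes ij: "i < j" "j < n" and ci: "cs ! i = n" and cj: "cs ! j = n"
  shows "gldim cs = \<infinity>"
proof -
  have Fi: "F (i + k*n) = i + n + k*n" for k using F_add[of i k] ci ij by (simp add: F_def)
  have Fj: "F (j + k*n) = j + n + k*n" for k using F_add[of j k] cj ij by (simp add: F_def)
  have Fpi: "(F^^k) i = i + k*n" for k
  proof (induction k)
    case (Suc k) then show ?case using Fi[of k] by simp
  qed simp
  have inv: "inv (i, j)" using ij Fi[of 0] by (simp add: inv_def)
  have rp: "rep (i, j) = (i, j - i)" using ij by (simp add: rep_def)
  have mem: "(i, j - i) \<in> indec_modules cs" using ij ci len by (auto simp: indec_modules_def)
  have np: "\<not> projat (i, j) m" for m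
  proof -
    have "\<exists>k. m = 2*k \<or> m = 2*k+1" by presburger
    then obtain k where "m = 2*k \<or> m = 2*k+1" by blast
    then show ?thesis
    proof
      assume m: "m = 2*k"
      have Fk: "(F^^k) j = j + k*n" for k
      proof (induction k)
        case (Suc k) then show ?case using Fj[of k] by simp
      qed simp
      have "F ((F^^k) i) = i + n + k*n" using Fpi Fi by simp
      then show ?thesis using ij Fk
        unfolding projat_def m step_even by (simp del: funpow.simps)
    next
      assume m: "m = 2*k+1"
      have Fk: "(F^^k) j = j + k*n" for k
      proof (induction k)
        case (Suc k) then show ?case using Fj[of k] by simp
      qed simp
      have "(F^^Suc k) i = i + n + k*n" using Fpi[of "Suc k"] by simp
      moreover have "F ((F^^k) j) = j + n + k*n" using Fk Fj by simp
      ultimately show ?thesis using ij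
        unfolding projat_def m step_odd by (simp del: funpow.simps)
    qed
  qed
  have "proj_dim cs (i, j - i) = \<infinity>" using pd_inf[OF inv np] rp by simp
  with gldim_ge[OF mem] show ?thesis by simp
qed

lemma gldim_inf:
  assumes "card {i. i < n \<and> cs ! i = n} \<noteq> 1"
  shows "gldim cs = \<infinity>"
proof (cases "\<exists>i<n. cs ! i = n")
  case False then show ?thesis by (intro gldim_inf_none) auto
next
  case True
  then obtain i where i: "i < n" "cs ! i = n" by blast
  have "\<exists>j<n. cs ! j = n \<and> j \<noteq> i"
  proof (rule ccontr)
    assume "\<not> ?thesis"
    then have "{i. i < n \<and> cs ! i = n} = {i}" using i by blast
    then have "card {i. i < n \<and> cs ! i = n} = 1" by simp
    with assms show False by simp
  qed
  then obtain j where j: "j < n" "cs ! j = n" "j \<noteq> i" by blast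
  show ?thesis
  proof (cases "i < j")
    case True then show ?thesis using gldim_inf_two[of i j] i j by simp
  next
    case False then show ?thesis using gldim_inf_two[of j i] i j by simp
  qed
qed

end

locale kup1 = kup +
  fixes r :: nat
  assumes r_lt: "r < n" and cr: "cs ! r = n"
    and uniq: "\<And>i. i < n \<Longrightarrow> cs ! i = n \<Longrightarrow> i = r"
begin

definition G :: "nat \<Rightarrow> nat" where "G x = F x - n"

lemma F_G: "F x = G x + n"
  using F_ge[of x] unfolding G_def by simp

lemma G_ge: "x \<le> G x"
  using F_ge[of x] unfolding G_def by simp

lemma G_mono: "x \<le> y \<Longrightarrow> G x \<le> G y"
  using F_mono unfolding G_def by (simp add: diff_le_mono)

lemma G_add: "G (x + k*n) = G x + k*n"
  using F_add[of x k] F_ge[of x] unfolding G_def by simp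

lemma Gpow_add: "(G^^j) (x + k*n) = (G^^j) x + k*n"
  by (induction j) (auto simp: G_add)

lemma Gpow_add1: "(G^^j) (x + n) = (G^^j) x + n"
  using Gpow_add[of j x 1] by simp

lemma Gpow_mono: "x \<le> y \<Longrightarrow> (G^^j) x \<le> (G^^j) y"
  by (induction j) (auto simp: G_mono)

lemma Gpow_ge: "x \<le> (G^^j) x"
  by (induction j) (auto intro: order_trans[OF _ G_ge])

lemma Fpow_G: "(F^^k) x = (G^^k) x + k*n"
proof (induction k)
  case (Suc k)
  have "(F^^Suc k) x = F ((G^^k) x + k*n)" using Suc by simp
  also have "\<dots> = G ((G^^k) x) + n + k*n" using F_add F_G by simp
  finally show ?case by simp
qed simp

lemma Fr: "F r = r + n"
  unfolding F_def using r_lt cr by simp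

lemma G_r: "G (r + k*n) = r + k*n"
  using G_add[of r k] Fr unfolding G_def by simp

lemma Gpow_r: "(G^^j) (r + k*n) = r + k*n"
  by (induction j) (auto simp: G_r)

lemma Gpow_r0: "(G^^j) r = r"
  using Gpow_r[of j 0] by simp

lemma Gpow_r1: "(G^^j) (r + n) = r + n"
  using Gpow_r[of j 1] by simp

lemma G_gt: "r < x \<Longrightarrow> x < r + n \<Longrightarrow> x < G x"
proof -
  assume a: "r < x" "x < r + n"
  have "x mod n \<noteq> r"
  proof (cases "x < n")
    case True then show ?thesis using a by simp
  next
    case False
    then have "x mod n = x - n" using a r_lt by (simp add: le_mod_geq)
    then show ?thesis using a False by simp
  qed
  moreover have "x mod n < n" using npos by simp
  ultimately have "cs ! (x mod n) \<noteq> n" using uniq by blast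
  moreover have "n \<le> cs ! (x mod n)" using ge npos by simp
  ultimately show ?thesis unfolding G_def F_def by simp
qed

lemma Gpow_le: "x \<le> r + n \<Longrightarrow> (G^^j) x \<le> r + n"
  using Gpow_mono[of x "r+n" j] Gpow_r1 by simp

lemma reach: "min (r + 1 + j) (r + n) \<le> (G^^j) (r+1)"
proof (induction j)
  case 0 then show ?case by simp
next
  case (Suc j)
  define y where "y = (G^^j) (r+1)"
  have yle: "y \<le> r + n" unfolding y_def using Gpow_le npos by simp
  have yge: "r + 1 \<le> y" unfolding y_def using Gpow_ge by simp
  show ?case
  proof (cases "y = r + n")
    case True
    then have "(G^^Suc j) (r+1) = r + n" using Gpow_r1[of 1] y_def by simp
    then show ?thesis by simp
  next
    case False
    then have "y < G y" using G_gt yle yge by simp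
    then show ?thesis using Suc y_def False yle by simp
  qed
qed

definition D :: nat where "D = (LEAST d. (G^^d) (r+1) = r + n)"

lemma D_ex: "(G^^(n-1)) (r+1) = r + n"
  using reach[of "n-1"] Gpow_le[of "r+1" "n-1"] npos by simp

lemma GD: "(G^^D) (r+1) = r + n"
  unfolding D_def using D_ex by (rule LeastI)

lemma GD_lt: "d < D \<Longrightarrow> (G^^d) (r+1) \<noteq> r + n"
  unfolding D_def by (rule not_less_Least)

lemma GD_all: "r + 1 \<le> x \<Longrightarrow> x \<le> r + n \<Longrightarrow> (G^^D) x = r + n"
  using Gpow_mono[of "r+1" x D] Gpow_le[of x D] GD by simp

lemma GD_all2: "r + n + 1 \<le> x \<Longrightarrow> x \<le> r + 2*n \<Longrightarrow> (G^^D) x = r + 2*n"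
proof -
  assume a: "r + n + 1 \<le> x" "x \<le> r + 2*n"
  have "(G^^D) x = (G^^D) ((x - n) + n)" using a by simp
  also have "\<dots> = (G^^D) (x - n) + n" by (rule Gpow_add1)
  also have "(G^^D) (x - n) = r + n" using a by (intro GD_all) auto
  finally show ?thesis by simp
qed

lemma proj_r: "r < b \<Longrightarrow> b \<le> r + n \<Longrightarrow> projat (r, b) (2*D)"
proof -
  assume b: "r < b" "b \<le> r + n"
  have "(F^^D) r = r + D*n" using Fpow_G Gpow_r0 by simp
  moreover have "(F^^D) b = r + n + D*n" using Fpow_G GD_all[of b] b by simp
  moreover have "F (r + D*n) = r + n + D*n" using F_add Fr by simp
  ultimately show ?thesis unfolding projat_def step_even by simp
qed

lemma pd_upper:
  assumes M: "M \<in> indec_modules cs"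
  shows "proj_dim cs M \<le> enat (2*D)"
proof -
  obtain i l where il: "M = (i,l)" by fastforce
  have i: "i < n" and l: "1 \<le> l" "l \<le> cs ! i" using M il len by (auto simp: indec_modules_def)
  define a where "a = (if r \<le> i then i else i + n)"
  have amod: "a mod n = i" unfolding a_def using i by simp
  have ar: "r \<le> a" "a < r + n" unfolding a_def using i r_lt by auto
  obtain rp iv where "(i,l) = rep (a, a+l)" "inv (a, a+l)" using mod_rep[of i l a] M il amod by blast
  note rp = this
  define b where "b = a + l"
  have ab: "a < b" "b \<le> F a" using rp(2) l unfolding inv_def b_def by auto
  have "\<exists>m\<le>2*D. projat (a, b) m"
  proof (cases "a = r")
    case True
    then have "b \<le> r + n" using ab Fr by simp
    then show ?thesis using proj_r[of b] ab True by auto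
  next
    case False
    then have ar2: "r < a" using ar by simp
    have GDa: "(G^^D) a = r + n" using GD_all[of a] ar2 ar by simp
    have n2: "2 \<le> n" using ar2 ar by simp
    have D1: "1 \<le> D"
    proof (rule ccontr)
      assume "\<not> 1 \<le> D"
      then have "D = 0" by simp
      then show False using GD n2 by simp
    qed
    show ?thesis
    proof (cases "b \<le> r + n")
      case True
      define k where "k = D - 1"
      have Dk: "D = Suc k" unfolding k_def using D1 by simp
      have e1: "(F^^D) a = r + n + D*n" using Fpow_G GDa by simp
      have e2: "F ((F^^k) b) = (F^^D) b" unfolding Dk by simp
      have e3: "(F^^D) b = r + n + D*n" using Fpow_G[of D b] GD_all[of b] True ab ar2 by simp
      have "projat (a,b) (2*k+1)" unfolding projat_def step_odd Dk[symmetric]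
        using e1 e2 e3 by (simp del: funpow.simps)
      moreover have "2*k+1 \<le> 2*D" using Dk by simp
      ultimately show ?thesis by blast
    next
      case False
      have "G a \<le> r + n" using Gpow_le[of a 1] ar by simp
      then have "b \<le> r + 2*n" using ab F_G[of a] by simp
      then have GDb: "(G^^D) b = r + 2*n" using GD_all2[of b] False by simp
      have "(F^^D) a = r + n + D*n" using Fpow_G GDa by simp
      moreover have "(F^^D) b = r + 2*n + D*n" using Fpow_G GDb by simp
      moreover have "F (r + n + D*n) = r + 2*n + D*n"
        using F_add[of r "Suc D"] Fr by (simp add: algebra_simps)
      ultimately have "projat (a,b) (2*D)" unfolding projat_def step_even by simp
      then show ?thesis by blast
    qed
  qed
  then obtain m where m: "m \<le> 2*D" "projat (a,b) m" by blast
  have "proj_dim cs M \<le> enat m" using pd_le[OF _ m(2)] rp il b_def by simp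
  also have "\<dots> \<le> enat (2*D)" using m by simp
  finally show ?thesis .
qed

lemma pd_r: "proj_dim cs (r, 1) = enat (2*D)"
proof -
  have iv: "inv (r, r+1)" using Fr npos by (simp add: inv_def)
  have rp: "rep (r, r+1) = (r, 1)" using r_lt by (simp add: rep_def)
  have np: "\<not> projat (r, r+1) j" if j: "j < 2*D" for j
  proof -
    have "\<exists>k. j = 2*k \<or> j = 2*k+1" by presburger
    then obtain k where "j = 2*k \<or> j = 2*k+1" by blast
    then show ?thesis
    proof
      assume jk: "j = 2*k"
      then have "k < D" using j by simp
      then have ne: "(G^^k) (r+1) \<noteq> r + n" by (rule GD_lt)
      have "(F^^k) r = r + k*n" using Fpow_G Gpow_r0 by simp
      moreover have "(F^^k) (r+1) = (G^^k) (r+1) + k*n" using Fpow_G by simp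
      moreover have "F (r + k*n) = r + n + k*n" using F_add Fr by simp
      ultimately show ?thesis using ne unfolding projat_def jk step_even by simp
    next
      assume jk: "j = 2*k+1"
      have "(F^^Suc k) r = r + n + k*n" using Fpow_G[of "Suc k" r] Gpow_r0[of "Suc k"] by (simp del: funpow.simps)
      moreover have "F ((F^^k) (r+1)) = (G^^Suc k) (r+1) + n + k*n"
        using Fpow_G[of "Suc k" "r+1"] by simp
      moreover have "r + 1 \<le> (G^^Suc k) (r+1)" using Gpow_ge by blast
      ultimately show ?thesis unfolding projat_def jk step_odd by (simp del: funpow.simps)
    qed
  qed
  have "proj_dim cs (rep (r, r+1)) = enat (2*D)"
    using pd_eq[OF iv proj_r[of "r+1"] np] npos by simp
  then show ?thesis using rp by simp
qed

lemma gldim_fin: "gldim cs = enat (2*D)"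
proof (rule antisym)
  show "gldim cs \<le> enat (2*D)" unfolding gldim_def by (rule SUP_least) (rule pd_upper)
  have "(r, 1) \<in> indec_modules cs" using r_lt cr npos len by (auto simp: indec_modules_def)
  then show "enat (2*D) \<le> gldim cs" using gldim_ge pd_r by metis
qed


lemma bounce_link:
  "bounce_count_seq (map (\<lambda>c. c + 1 - n) (tl (rotate r cs)) @ [1]) = D"
proof -
  define A where "A = map (\<lambda>c. c + 1 - n) (tl (rotate r cs)) @ [1]"
  have lA: "length A = n" unfolding A_def using len npos by simp
  have Ab: "A ! b = cs ! ((r + b + 1) mod n) + 1 - n" if b: "b < n - 1" for b
  proof -
    have "A ! b = rotate r cs ! (Suc b) + 1 - n" unfolding A_def using b len
      by (simp add: nth_append nth_tl)
    also have "rotate r cs ! (Suc b) = cs ! ((r + Suc b) mod n)" using b len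
      by (simp add: nth_rotate)
    finally show ?thesis by simp
  qed
  have Alast: "A ! (n - 1) = 1" unfolding A_def using len npos by (simp add: nth_append)
  have bp: "bounce_pts A t + r + 1 = (G^^t) (r+1)" for t
  proof (induction t)
    case 0 then show ?case by simp
  next
    case (Suc t)
    define b where "b = bounce_pts A t"
    define y where "y = (G^^t) (r+1)"
    have yb: "y = b + r + 1" using Suc b_def y_def by simp
    have "y \<le> r + n" unfolding y_def using Gpow_le npos by simp
    then have bn: "b \<le> n - 1" using yb by simp
    show ?case
    proof (cases "b = n - 1")
      case True
      then have "y = r + n" using yb npos by simp
      then have "G y = r + n" using Gpow_r1[of 1] by simp
      moreover have "bounce_pts A (Suc t) = b" using True Alast b_def by simp
      ultimately show ?thesis using y_def True npos by simp
    next
      case False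
      then have blt: "b < n - 1" using bn by simp
      define c where "c = cs ! (y mod n)"
      have cge: "n \<le> c" unfolding c_def using ge npos by simp
      have "A ! b = c + 1 - n" using Ab[OF blt] yb c_def by (simp add: add.commute add.left_commute)
      then have "bounce_pts A (Suc t) = b + c - n" using b_def cge by simp
      moreover have "G y = y + c - n" unfolding G_def F_def c_def by simp
      ultimately show ?thesis using yb y_def cge by simp
    qed
  qed
  have eq: "bounce_pts A d = length A - 1 \<longleftrightarrow> (G^^d) (r+1) = r + n" for d
    using bp[of d] lA npos by auto
  have "bounce_count_seq A = D" unfolding bounce_count_seq_def D_def eq by simp
  then show ?thesis unfolding A_def .
qed


definition Aseq :: "nat list" where "Aseq = map (\<lambda>c. c + 1 - n) (tl (rotate r cs)) @ [1]"

lemma Aseq_len: "length Aseq = n - 1 + 1"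
  unfolding Aseq_def using len npos by simp

lemma Aseq_nth: "b < n - 1 \<Longrightarrow> Aseq ! b = cs ! ((r + b + 1) mod n) + 1 - n"
proof -
  assume b: "b < n - 1"
  have "Aseq ! b = rotate r cs ! (Suc b) + 1 - n" unfolding Aseq_def using b len
    by (simp add: nth_append nth_tl)
  also have "rotate r cs ! (Suc b) = cs ! ((r + Suc b) mod n)" using b len
    by (simp add: nth_rotate)
  finally show ?thesis by simp
qed

lemma Aseq_last: "Aseq ! (n - 1) = 1"
  unfolding Aseq_def using len npos by (simp add: nth_append)

lemma idx_ne: "0 < t \<Longrightarrow> t < n \<Longrightarrow> (r + t) mod n \<noteq> r"
proof -
  assume t: "0 < t" "t < n"
  show ?thesis
  proof (cases "r + t < n")
    case True then show ?thesis using t by simp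
  next
    case False
    then have "(r + t) mod n = r + t - n" using t r_lt by (simp add: le_mod_geq)
    then show ?thesis using t False by simp
  qed
qed

lemma Aseq_ge2: "b < n - 1 \<Longrightarrow> 2 \<le> Aseq ! b"
proof -
  assume b: "b < n - 1"
  define j where "j = (r + (b + 1)) mod n"
  have "j \<noteq> r" unfolding j_def using b by (intro idx_ne) auto
  moreover have "j < n" unfolding j_def using npos by simp
  ultimately have "cs ! j \<noteq> n" "n \<le> cs ! j" using uniq ge by auto
  then show ?thesis using Aseq_nth[OF b] unfolding j_def by (simp add: add.assoc)
qed

lemma Aseq_mono: "b < n - 1 \<Longrightarrow> Aseq ! b \<le> Aseq ! (Suc b) + 1"
proof -
  assume b: "b < n - 1"
  define j where "j = (r + b + 1) mod n"
  have jn: "j < n" unfolding j_def using npos by simp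
  have cm: "cs ! j \<le> cs ! ((j + 1) mod n) + 1" using cmono[OF jn] .
  have j1: "(j + 1) mod n = (r + Suc b + 1) mod n" unfolding j_def by (simp add: mod_Suc_eq)
  show ?thesis
  proof (cases "Suc b < n - 1")
    case True
    have "n \<le> cs ! ((r + Suc b + 1) mod n)" using ge npos by simp
    then show ?thesis using Aseq_nth[OF b] Aseq_nth[OF True] cm j1 unfolding j_def by simp
  next
    case False
    then have sb: "Suc b = n - 1" using b by simp
    then have "(r + Suc b + 1) mod n = r" using r_lt b by simp
    then have "cs ! j \<le> n + 1" using cm j1 cr by simp
    then show ?thesis using Aseq_nth[OF b] Aseq_last sb unfolding j_def by simp
  qed
qed

lemma iso_rot:
  assumes "kupisch_iso cs ds" "ds ! 0 = n"
  shows "ds = rotate r cs"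
proof -
  have "ds = cs \<or> (\<exists>k. ds = rotate k cs)" using assms(1) unfolding kupisch_iso_def by blast
  then show ?thesis
  proof
    assume "ds = cs"
    then have "cs ! 0 = n" using assms by simp
    then have "r = 0" using uniq[of 0] npos by simp
    then show ?thesis using \<open>ds = cs\<close> by simp
  next
    assume "\<exists>k. ds = rotate k cs"
    then obtain k where k: "ds = rotate k cs" by blast
    have "ds ! 0 = cs ! (k mod n)" using k len npos by (simp add: nth_rotate)
    then have "k mod n = r" using assms(2) uniq[of "k mod n"] npos by simp
    then show ?thesis using k len by (metis rotate_conv_mod)
  qed
qed

lemma rot_nth0: "rotate r cs ! 0 = n"
  using len npos r_lt cr by (simp add: nth_rotate)


lemma exists_path: "\<exists>p. dyck_path (n - 1) p \<and> area_seq p = map (\<lambda>c. c + 1 - n) (tl (rotate r cs)) @ [1]"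
  using area_exists[of Aseq "n - 1"] Aseq_len Aseq_last Aseq_ge2 Aseq_mono unfolding Aseq_def by blast

lemma gldim_bounce:
  assumes "kupisch_iso cs ds" "kupisch_dyck n ds p"
  shows "gldim cs = enat (2 * bounce_count p)"
proof -
  have ds: "ds = rotate r cs" using iso_rot assms unfolding kupisch_dyck_def by blast
  have "bounce_count p = D"
    using assms(2) bounce_link unfolding bounce_count_def kupisch_dyck_def ds by simp
  then show ?thesis using gldim_fin by simp
qed

lemma path_unique:
  assumes "kupisch_iso cs ds" "kupisch_iso cs ds'" "dyck_path (n - 1) p" "dyck_path (n - 1) p'"
    "kupisch_dyck n ds p" "kupisch_dyck n ds' p'"
  shows "p = p'"
proof -
  have "ds = rotate r cs" "ds' = rotate r cs" using iso_rot assms unfolding kupisch_dyck_def by blast+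
  then have "area_seq p = area_seq p'" using assms(5,6) unfolding kupisch_dyck_def by simp
  then show ?thesis using area_inj assms(3,4) by blast
qed

end


lemma sincere_ge:
  assumes "length cs = n" "sincere cs" "i < n"
  shows "n \<le> cs ! i"
proof -
  have eq: "proj_comp_factors cs i = (\<lambda>j. (i + j) mod n) ` {..<cs ! i}"
    unfolding proj_comp_factors_def using assms(1) by auto
  have "{0..<n} = (\<lambda>j. (i + j) mod n) ` {..<cs ! i}"
    using assms eq unfolding sincere_def by simp
  then have "card {0..<n} \<le> card {..<cs ! i}" by (metis card_image_le finite_lessThan)
  then show ?thesis by simp
qed

lemma sincere_of:
  assumes "length cs = n" "1 \<le> n" "\<And>i. i < n \<Longrightarrow> n \<le> cs ! i"
  shows "sincere cs"
  unfolding sincere_def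
proof (intro allI impI)
  fix i assume i: "i < length cs"
  show "proj_comp_factors cs i = {0..<length cs}"
  proof
    show "proj_comp_factors cs i \<subseteq> {0..<length cs}"
    proof
      fix x assume "x \<in> proj_comp_factors cs i"
      then obtain j where "x = (i + j) mod length cs" unfolding proj_comp_factors_def by blast
      moreover have "0 < length cs" using assms(1,2) by simp
      ultimately show "x \<in> {0..<length cs}" by simp
    qed
  next
    show "{0..<length cs} \<subseteq> proj_comp_factors cs i"
    proof
      fix t assume t: "t \<in> {0..<length cs}"
      define j where "j = (t + n - i) mod n"
      have "j < n" unfolding j_def using assms(2) by simp
      then have jlt: "j < cs ! i" using assms(3)[of i] i assms(1) by simp
      have "(i + j) mod n = (i + (t + n - i)) mod n" unfolding j_def by (simp add: mod_add_right_eq)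
      also have "i + (t + n - i) = t + n" using i assms(1) by simp
      finally have "(i + j) mod n = t" using t assms(1) by simp
      then show "t \<in> proj_comp_factors cs i" unfolding proj_comp_factors_def using jlt assms(1) by auto
    qed
  qed
qed

lemma nak_kup:
  assumes "1 \<le> n" "nakayama n cs" "sincere cs"
  shows "kup n cs"
proof -
  have len: "length cs = n" using assms unfolding nakayama_def by simp
  have ge: "\<And>i. i < n \<Longrightarrow> n \<le> cs ! i" using sincere_ge[OF len assms(3)] by blast
  have cm: "cs ! i \<le> cs ! ((i+1) mod n) + 1" if i: "i < n" for i
  proof (cases "kupisch_cyclic cs")
    case True then show ?thesis using i len unfolding kupisch_cyclic_def by auto
  next
    case False
    then have lin: "kupisch_linear cs" using assms unfolding nakayama_def by simp
    then have "cs ! (n - 1) = 1" using len unfolding kupisch_linear_def by simp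
    then have "n = 1" using ge[of "n - 1"] assms(1) by simp
    then show ?thesis using i by simp
  qed
  show ?thesis by (unfold_locales) (use len assms(1) ge cm in auto)
qed

lemma cyc_rotate:
  assumes "kupisch_cyclic cs"
  shows "kupisch_cyclic (rotate k cs)"
proof -
  define n where "n = length cs"
  have n: "1 \<le> n" using assms unfolding kupisch_cyclic_def n_def by simp
  have c: "\<And>i. i < n \<Longrightarrow> cs ! i \<ge> 2 \<and> cs ! ((i + 1) mod n) + 1 \<ge> cs ! i"
    using assms unfolding kupisch_cyclic_def n_def by simp
  show ?thesis unfolding kupisch_cyclic_def
  proof (intro conjI)
    show "1 \<le> length (rotate k cs)" using n n_def by simp
  next
    show "\<forall>i<length (rotate k cs). 2 \<le> rotate k cs ! i \<and> rotate k cs ! i \<le> rotate k cs ! ((i + 1) mod length (rotate k cs)) + 1"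
    proof (intro allI impI)
      fix i assume i: "i < length (rotate k cs)"
      then have i': "i < n" using n_def by simp
      define j where "j = (k + i) mod n"
      have jn: "j < n" unfolding j_def using n by simp
      have e1: "rotate k cs ! i = cs ! j" using i' n_def j_def by (simp add: nth_rotate)
      have "(i + 1) mod n < n" using n by simp
      then have e2: "rotate k cs ! ((i + 1) mod n) = cs ! ((k + (i + 1) mod n) mod n)"
        using n_def by (simp add: nth_rotate)
      have m1: "(k + (i + 1) mod n) mod n = (k + (i + 1)) mod n" by (rule mod_add_right_eq)
      have m2: "(j + 1) mod n = (k + i + 1) mod n" unfolding j_def by (rule mod_add_left_eq)
      have "(k + (i + 1) mod n) mod n = (j + 1) mod n" using m1 m2 by (simp add: add.assoc)
      then show "2 \<le> rotate k cs ! i \<and> rotate k cs ! i \<le> rotate k cs ! ((i + 1) mod length (rotate k cs)) + 1"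
        using c[OF jn] e1 e2 n_def by simp
    qed
  qed
qed

lemma lin_sinc_n1:
  assumes "kupisch_linear cs" "sincere cs"
  shows "length cs = 1"
proof -
  have "cs ! (length cs - 1) = 1" "1 \<le> length cs" using assms(1) unfolding kupisch_linear_def by auto
  moreover have "length cs - 1 < length cs" using \<open>1 \<le> length cs\<close> by simp
  ultimately have "length cs \<le> 1" using sincere_ge[of cs "length cs" "length cs - 1"] assms(2) by simp
  then show ?thesis using \<open>1 \<le> length cs\<close> by simp
qed

lemma fin_kup1:
  assumes "kup n cs" "gldim cs \<noteq> \<infinity>"
  shows "\<exists>r. kup1 n cs r"
proof -
  have "card {i. i < n \<and> cs ! i = n} = 1"
  proof (rule ccontr)
    assume "card {i. i < n \<and> cs ! i = n} \<noteq> 1"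
    then have "gldim cs = \<infinity>" by (rule kup.gldim_inf[OF assms(1)])
    then show False using assms(2) by simp
  qed
  then obtain r where r: "{i. i < n \<and> cs ! i = n} = {r}" by (rule card_1_singletonE)
  have r1: "r < n" "cs ! r = n" using r by auto
  have r2: "\<And>i. i < n \<Longrightarrow> cs ! i = n \<Longrightarrow> i = r" using r by auto
  have "kup1_axioms n cs r" unfolding kup1_axioms_def using r1 r2 by blast
  then have "kup1 n cs r" unfolding kup1_def using assms(1) by blast
  then show ?thesis by blast
qed

lemma card1_kup1:
  assumes "kup n cs" "card {i. i < n \<and> cs ! i = n} = 1"
  shows "\<exists>r. kup1 n cs r"
proof -
  obtain r where r: "{i. i < n \<and> cs ! i = n} = {r}" using assms(2) by (rule card_1_singletonE)
  have r1: "r < n" "cs ! r = n" using r by auto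
  have r2: "\<And>i. i < n \<Longrightarrow> cs ! i = n \<Longrightarrow> i = r" using r by auto
  have "kup1_axioms n cs r" unfolding kup1_axioms_def using r1 r2 by blast
  then have "kup1 n cs r" unfolding kup1_def using assms(1) by blast
  then show ?thesis by blast
qed

lemma cyc_of_nak:
  assumes "nakayama n cs" "sincere cs" "2 \<le> n"
  shows "kupisch_cyclic cs"
proof (rule ccontr)
  assume "\<not> kupisch_cyclic cs"
  then have "kupisch_linear cs" using assms(1) unfolding nakayama_def by simp
  then have "length cs = 1" using lin_sinc_n1 assms(2) by blast
  then show False using assms unfolding nakayama_def by simp
qed

lemma construct:
  assumes n: "1 \<le> n" and d: "dyck_path (n - 1) p"
  shows "\<exists>cs. nakayama n cs \<and> sincere cs \<and> gldim cs \<noteq> \<infinity> \<and> kupisch_dyck n cs p"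
proof -
  define A where "A = area_seq p"
  define m where "m = n - 1"
  have nm: "n = m + 1" using n m_def by simp
  have dm: "dyck_path m p" using d m_def by simp
  note AP = area_props[OF dm, folded A_def]
  define cs where "cs = n # map (\<lambda>a. a + n - 1) (butlast A)"
  have lcs: "length cs = n" unfolding cs_def using AP(1) nm by simp
  have c0: "cs ! 0 = n" unfolding cs_def by simp
  have ci: "cs ! i = A ! (i - 1) + n - 1" if i0: "0 < i" and iN: "i < n" for i
  proof -
    obtain j where j: "i = Suc j" using i0 by (cases i) auto
    have "j < length (butlast A)" using iN j AP(1) nm by simp
    then show ?thesis unfolding cs_def j by (simp add: nth_butlast)
  qed
  have A1: "1 \<le> A ! k" if "k \<le> m" for k
    using AP(2) AP(3)[of k] that by (cases "k = m") auto
  have ge: "n \<le> cs ! i" if "i < n" for i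
  proof (cases "i = 0")
    case True then show ?thesis using c0 by simp
  next
    case False then show ?thesis using ci[of i] that A1[of "i - 1"] nm by simp
  qed
  have uq: "i = 0" if "i < n" "cs ! i = n" for i
  proof (rule ccontr)
    assume "i \<noteq> 0"
    moreover have "i - 1 < m" using that \<open>i \<noteq> 0\<close> nm by simp
    ultimately have "cs ! i = A ! (i - 1) + n - 1" "2 \<le> A ! (i - 1)" using ci[of i] that AP(3)[of "i - 1"] by auto
    then show False using that by simp
  qed
  have cm: "cs ! i \<le> cs ! ((i + 1) mod n) + 1" if i: "i < n" for i
  proof (cases "i + 1 < n")
    case True
    then have md: "(i + 1) mod n = i + 1" by simp
    show ?thesis
    proof (cases "i = 0")
      case True then show ?thesis using md ge[of 1] c0 \<open>i + 1 < n\<close> by simp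
    next
      case False
      have "A ! (i - 1) \<le> A ! (Suc (i - 1)) + 1" using AP(4)[of "i - 1"] False \<open>i + 1 < n\<close> nm by simp
      then show ?thesis using md ci[of i] ci[of "i + 1"] False \<open>i + 1 < n\<close> nm by simp
    qed
  next
    case False
    then have ii: "i = n - 1" using i by simp
    then have md: "(i + 1) mod n = 0" using n by simp
    show ?thesis
    proof (cases "i = 0")
      case True then show ?thesis using md c0 by simp
    next
      case False
      have "A ! (i - 1) \<le> A ! (Suc (i - 1)) + 1" using AP(4)[of "i - 1"] False ii nm by simp
      moreover have "Suc (i - 1) = m" using False ii nm by simp
      ultimately have "A ! (i - 1) \<le> 2" using AP(2) by simp
      then show ?thesis using md c0 ci[of i] False i by simp
    qed
  qed
  have k: "kup n cs" by unfold_locales (use lcs n ge cm in auto)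
  have k1: "kup1 n cs 0"
    unfolding kup1_def kup1_axioms_def using k n c0 uq by auto
  have gl: "gldim cs \<noteq> \<infinity>" using kup1.gldim_fin[OF k1] by simp
  have sc: "sincere cs" using sincere_of[OF lcs n ge] by blast
  have nk: "nakayama n cs"
  proof (cases "n = 1")
    case True
    then have "cs = [1]" using lcs c0 by (cases cs) auto
    then show ?thesis using True unfolding nakayama_def kupisch_linear_def by simp
  next
    case False
    have n2: "2 \<le> n" using False n by simp
    have "\<forall>i<n. 2 \<le> cs ! i \<and> cs ! i \<le> cs ! ((i + 1) mod n) + 1"
    proof (intro allI impI conjI)
      fix i assume "i < n"
      then show "2 \<le> cs ! i" using ge[of i] n2 by linarith
      show "cs ! i \<le> cs ! ((i + 1) mod n) + 1" using cm \<open>i < n\<close> by blast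
    qed
    then have "kupisch_cyclic cs" unfolding kupisch_cyclic_def lcs using n by blast
    then show ?thesis using lcs unfolding nakayama_def by simp
  qed
  have ida: "\<forall>a. a + n - 1 + 1 - n = a" using n by simp
  have "map (\<lambda>c. c + 1 - n) (tl cs) = butlast A" unfolding cs_def using ida by (simp add: comp_def)
  moreover have "A \<noteq> []" using AP(1) by auto
  moreover have "last A = 1" using AP(1) AP(2) \<open>A \<noteq> []\<close> by (simp add: last_conv_nth)
  ultimately have "map (\<lambda>c. c + 1 - n) (tl cs) @ [1] = A" by (metis append_butlast_last_id)
  then have "kupisch_dyck n cs p" unfolding kupisch_dyck_def A_def using c0 by simp
  then show ?thesis using nk sc gl by blast
qed

lemma S_kup1:
  assumes "1 \<le> n" "nakayama n cs" "sincere cs" "gldim cs \<noteq> \<infinity>"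
  shows "kup n cs" "\<exists>r. kup1 n cs r"
  using nak_kup[OF assms(1-3)] fin_kup1 assms(4) by blast+

lemma rot_back:
  assumes "length cs' = n" "r' < n" "rotate r cs = rotate r' cs'"
  shows "cs' = rotate (n - r' + r) cs"
proof -
  have "rotate (n - r' + r) cs = rotate (n - r') (rotate r cs)" by (simp add: rotate_rotate)
  also have "\<dots> = rotate (n - r' + r') cs'" using assms(3) by (simp add: rotate_rotate)
  also have "\<dots> = cs'" using assms(1,2) by simp
  finally show ?thesis by simp
qed


theorem theorem4p7:
  fixes n :: nat
  assumes "n \<ge> 1"
  defines "S \<equiv> {cs. nakayama n cs \<and> sincere cs \<and> gldim cs \<noteq> \<infinity>}"
  shows
    "(\<forall>cs. nakayama n cs \<and> sincere cs \<longrightarrow>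
        (gldim cs \<noteq> \<infinity> \<longleftrightarrow> card {i. i < n \<and> cs ! i = n} = 1))
   \<and> (\<forall>cs \<in> S. \<exists>ds p. kupisch_iso cs ds \<and> dyck_path (n - 1) p \<and> kupisch_dyck n ds p)
   \<and> (\<forall>cs \<in> S. \<forall>ds ds' p p'. kupisch_iso cs ds \<and> kupisch_iso cs ds' \<and>
        dyck_path (n - 1) p \<and> dyck_path (n - 1) p' \<and>
        kupisch_dyck n ds p \<and> kupisch_dyck n ds' p' \<longrightarrow> p = p')
   \<and> (\<forall>cs \<in> S. \<forall>cs' \<in> S. \<forall>ds ds' p. kupisch_iso cs ds \<and> kupisch_iso cs' ds' \<and>
        dyck_path (n - 1) p \<and> kupisch_dyck n ds p \<and> kupisch_dyck n ds' p \<longrightarrow> kupisch_iso cs cs')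
   \<and> (\<forall>p. dyck_path (n - 1) p \<longrightarrow> (\<exists>cs \<in> S. kupisch_dyck n cs p))
   \<and> (\<forall>cs \<in> S. \<forall>ds p. kupisch_iso cs ds \<and> dyck_path (n - 1) p \<and> kupisch_dyck n ds p \<longrightarrow>
        gldim cs = enat (2 * bounce_count p))"
proof -
  have Sk: "kup n cs" "\<exists>r. kup1 n cs r" if "cs \<in> S" for cs
    using S_kup1[OF assms(1)] that unfolding S_def by blast+
  have Snak: "nakayama n cs" "sincere cs" if "cs \<in> S" for cs using that unfolding S_def by auto
  have P1: "\<forall>cs. nakayama n cs \<and> sincere cs \<longrightarrow>
        (gldim cs \<noteq> \<infinity> \<longleftrightarrow> card {i. i < n \<and> cs ! i = n} = 1)"
  proof (intro allI impI)
    fix cs assume a: "nakayama n cs \<and> sincere cs"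
    then have k: "kup n cs" using nak_kup assms(1) by blast
    show "gldim cs \<noteq> \<infinity> \<longleftrightarrow> card {i. i < n \<and> cs ! i = n} = 1"
    proof
      assume g: "gldim cs \<noteq> \<infinity>"
      show "card {i. i < n \<and> cs ! i = n} = 1"
      proof (rule ccontr)
        assume "card {i. i < n \<and> cs ! i = n} \<noteq> 1"
        then have "gldim cs = \<infinity>" by (rule kup.gldim_inf[OF k])
        with g show False by simp
      qed
    next
      assume "card {i. i < n \<and> cs ! i = n} = 1"
      then obtain r where "kup1 n cs r" using card1_kup1[OF k] by blast
      then show "gldim cs \<noteq> \<infinity>" using kup1.gldim_fin by simp
    qed
  qed
  have isorot: "kupisch_iso cs (rotate r cs)" if cs: "cs \<in> S" and k1: "kup1 n cs r" for cs r
  proof (cases "n = 1")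
    case True
    then have "length cs = 1" using Snak(1)[OF cs] unfolding nakayama_def by simp
    then show ?thesis unfolding kupisch_iso_def by simp
  next
    case False
    then have "kupisch_cyclic cs" using cyc_of_nak Snak[OF cs] assms(1) by simp
    then show ?thesis unfolding kupisch_iso_def using cyc_rotate by blast
  qed
  have P2: "\<forall>cs \<in> S. \<exists>ds p. kupisch_iso cs ds \<and> dyck_path (n - 1) p \<and> kupisch_dyck n ds p"
  proof
    fix cs assume cs: "cs \<in> S"
    obtain r where k1: "kup1 n cs r" using Sk[OF cs] by blast
    obtain p where p: "dyck_path (n - 1) p" "area_seq p = map (\<lambda>c. c + 1 - n) (tl (rotate r cs)) @ [1]"
      using kup1.exists_path[OF k1] by blast
    have "kupisch_dyck n (rotate r cs) p" unfolding kupisch_dyck_def using p(2) kup1.rot_nth0[OF k1] by simp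
    then show "\<exists>ds p. kupisch_iso cs ds \<and> dyck_path (n - 1) p \<and> kupisch_dyck n ds p"
      using isorot[OF cs k1] p(1) by blast
  qed
  have P3: "\<forall>cs \<in> S. \<forall>ds ds' p p'. kupisch_iso cs ds \<and> kupisch_iso cs ds' \<and>
        dyck_path (n - 1) p \<and> dyck_path (n - 1) p' \<and>
        kupisch_dyck n ds p \<and> kupisch_dyck n ds' p' \<longrightarrow> p = p'"
  proof (intro ballI allI impI)
    fix cs ds ds' p p' assume cs: "cs \<in> S" and h: "kupisch_iso cs ds \<and> kupisch_iso cs ds' \<and>
        dyck_path (n - 1) p \<and> dyck_path (n - 1) p' \<and> kupisch_dyck n ds p \<and> kupisch_dyck n ds' p'"
    obtain r where k1: "kup1 n cs r" using Sk[OF cs] by blast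
    show "p = p'" using kup1.path_unique[OF k1] h by blast
  qed
  have P4: "\<forall>cs \<in> S. \<forall>cs' \<in> S. \<forall>ds ds' p. kupisch_iso cs ds \<and> kupisch_iso cs' ds' \<and>
        dyck_path (n - 1) p \<and> kupisch_dyck n ds p \<and> kupisch_dyck n ds' p \<longrightarrow> kupisch_iso cs cs'"
  proof (intro ballI allI impI)
    fix cs cs' ds ds' p assume cs: "cs \<in> S" and cs': "cs' \<in> S" and h: "kupisch_iso cs ds \<and> kupisch_iso cs' ds' \<and>
        dyck_path (n - 1) p \<and> kupisch_dyck n ds p \<and> kupisch_dyck n ds' p"
    obtain r where k1: "kup1 n cs r" using Sk[OF cs] by blast
    obtain r' where k1': "kup1 n cs' r'" using Sk[OF cs'] by blast
    have ds: "ds = rotate r cs" using kup1.iso_rot[OF k1] h unfolding kupisch_dyck_def by blast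
    have ds': "ds' = rotate r' cs'" using kup1.iso_rot[OF k1'] h unfolding kupisch_dyck_def by blast
    have lc: "length cs = n" "length cs' = n" using Snak(1)[OF cs] Snak(1)[OF cs'] unfolding nakayama_def by auto
    have geq: "\<forall>x \<in> set cs. n \<le> x" using kup.ge[OF Sk(1)[OF cs]] lc by (auto simp: in_set_conv_nth)
    have geq': "\<forall>x \<in> set cs'. n \<le> x" using kup.ge[OF Sk(1)[OF cs']] lc by (auto simp: in_set_conv_nth)
    have e1: "area_seq p = map (\<lambda>c. c + 1 - n) (tl ds) @ [1]"
      and e2: "area_seq p = map (\<lambda>c. c + 1 - n) (tl ds') @ [1]"
      using h unfolding kupisch_dyck_def by auto
    from e1 e2 have mm: "map (\<lambda>c. c + 1 - n) (tl ds) = map (\<lambda>c. c + 1 - n) (tl ds')"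
      by (metis append1_eq_conv)
    have stl: "set (tl xs) \<subseteq> set xs" for xs :: "nat list" by (cases xs) auto
    have sub: "set (tl ds) \<union> set (tl ds') \<subseteq> {c. n \<le> c}" using geq geq' ds ds' stl[of ds] stl[of ds']
      by auto
    have "inj_on (\<lambda>c. c + 1 - n) {c. n \<le> c}" unfolding inj_on_def by auto
    then have "inj_on (\<lambda>c. c + 1 - n) (set (tl ds) \<union> set (tl ds'))" using sub inj_on_subset by blast
    then have tleq: "tl ds = tl ds'" using mm inj_on_map_eq_map by blast
    have ne: "ds \<noteq> []" "ds' \<noteq> []" using ds ds' lc assms(1) by auto
    have "hd ds = hd ds'" using ne h unfolding kupisch_dyck_def by (simp add: hd_conv_nth)
    then have "ds = ds'" using tleq ne by (metis list.collapse)
    then have "rotate r cs = rotate r' cs'" using ds ds' by simp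
    then have bk: "cs' = rotate (n - r' + r) cs" using rot_back lc kup1.r_lt[OF k1'] by blast
    show "kupisch_iso cs cs'"
    proof (cases "n = 1")
      case True
      then have "cs' = cs" using bk lc by simp
      then show ?thesis unfolding kupisch_iso_def by simp
    next
      case False
      then have "kupisch_cyclic cs" "kupisch_cyclic cs'"
        using cyc_of_nak Snak[OF cs] Snak[OF cs'] assms(1) by auto
      then show ?thesis unfolding kupisch_iso_def using bk by blast
    qed
  qed
  have P5: "\<forall>p. dyck_path (n - 1) p \<longrightarrow> (\<exists>cs \<in> S. kupisch_dyck n cs p)"
  proof (intro allI impI)
    fix p assume "dyck_path (n - 1) p"
    then obtain cs where "nakayama n cs \<and> sincere cs \<and> gldim cs \<noteq> \<infinity> \<and> kupisch_dyck n cs p"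
      using construct assms(1) by blast
    then show "\<exists>cs \<in> S. kupisch_dyck n cs p" unfolding S_def by blast
  qed
  have P6: "\<forall>cs \<in> S. \<forall>ds p. kupisch_iso cs ds \<and> dyck_path (n - 1) p \<and> kupisch_dyck n ds p \<longrightarrow>
        gldim cs = enat (2 * bounce_count p)"
  proof (intro ballI allI impI)
    fix cs ds p assume cs: "cs \<in> S" and h: "kupisch_iso cs ds \<and> dyck_path (n - 1) p \<and> kupisch_dyck n ds p"
    obtain r where k1: "kup1 n cs r" using Sk[OF cs] by blast
    show "gldim cs = enat (2 * bounce_count p)" using kup1.gldim_bounce[OF k1] h by blast
  qed
  show ?thesis using P1 P2 P3 P4 P5 P6 by blast
qed

end
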